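(* Let $N\ge 1$, let $0\le\epsilon<1/2$, and let $H_N=\sum_{k=1}^N\frac1k$. Any comparison-based quantum algorithm for sorting $N$ numbers (in the model described in the context) that errs with probability at most $\epsilon$ uses at least $$\Big(1-2\sqrt{\epsilon(1-\epsilon)}\Big)\frac{N}{2\pi}(H_N-1)$$ comparisons. In particular, every exact such algorithm uses more than $\frac{N}{2\pi}(\ln(N)-1)$ comparisons.
   Context: Sorting problem: given a list $x=(x_0,\dots,x_{N-1})$ of numbers, output a permutation $\sigma$ of $\{0,\dots,N-1\}$ such that $(x_{\sigma(0)},\dots,x_{\sigma(N-1)})$ is non-decreasing. Comparison-based quantum model: the algorithm acts on a Hilbert space with orthonormal basis $\{|z;i,i'\rangle\}$ ($z,i,i'$ non-negative integers); the input is accessible only through the comparison oracle $O_x|z;i,i'\rangle=(-1)^{m_{ii'}}|z;i,i'\rangle$, where for $0\le i,i'<N$, $m_{ii'}=1$ if $x_i<x_{i'}$ and $m_{ii'}=0$ otherwise (one application of $O_x$ is one comparison). An algorithm using $T$ comparisons is a unitary $(U O_x)^T U$ with $U$ a fixed unitary independent of $x$, applied to $|0\rangle$, followed by a measurement in the computational basis and reading of an output register. It errs with probability at most $\epsilon$ if for every input list the output is a correct sorting permutation with probability at least $1-\epsilon$; it is exact if $\epsilon=0$. *)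

theory Defs
  imports "HOL-Analysis.Analysis"
begin

text \<open>Computational basis states |z;i,i'> are labelled by triples (z,i,i') of naturals;
  states of the (infinite-dimensional) Hilbert space are square-summable amplitude functions.\<close>

type_synonym basis = "nat \<times> nat \<times> nat"
type_synonym state = "basis \<Rightarrow> complex"

definition l2 :: "state set" where
  "l2 = {\<psi>. (\<lambda>b. (cmod (\<psi> b))\<^sup>2) summable_on UNIV}"

definition sqnorm :: "state \<Rightarrow> real" where
  "sqnorm \<psi> = infsum (\<lambda>b. (cmod (\<psi> b))\<^sup>2) UNIV"

text \<open>A unitary on l2: a linear, norm-preserving bijection of l2 onto itself
  (its values outside l2 are irrelevant).\<close>
definition is_unitary :: "(state \<Rightarrow> state) \<Rightarrow> bool" where
  "is_unitary U \<longleftrightarrow>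
     U ` l2 = l2 \<and>
     (\<forall>\<psi>\<in>l2. \<forall>\<phi>\<in>l2. U (\<lambda>b. \<psi> b + \<phi> b) = (\<lambda>b. U \<psi> b + U \<phi> b)) \<and>
     (\<forall>\<psi>\<in>l2. \<forall>c. U (\<lambda>b. c * \<psi> b) = (\<lambda>b. c * U \<psi> b)) \<and>
     (\<forall>\<psi>\<in>l2. sqnorm (U \<psi>) = sqnorm \<psi>)"

definition cmp_bit :: "nat \<Rightarrow> real list \<Rightarrow> nat \<Rightarrow> nat \<Rightarrow> bool" where
  "cmp_bit N x i i' \<longleftrightarrow> i < N \<and> i' < N \<and> x ! i < x ! i'"

definition cmp_op :: "nat \<Rightarrow> real list \<Rightarrow> state \<Rightarrow> state" where
  "cmp_op N x \<psi> = (\<lambda>(z, i, i'). (if cmp_bit N x i i' then -1 else 1) * \<psi> (z, i, i'))"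

definition ket0 :: state where
  "ket0 = (\<lambda>b. if b = (0, 0, 0) then 1 else 0)"

definition final_state :: "(state \<Rightarrow> state) \<Rightarrow> nat \<Rightarrow> real list \<Rightarrow> nat \<Rightarrow> state" where
  "final_state U N x T = ((U \<circ> cmp_op N x) ^^ T) (U ket0)"

definition is_sorting_perm :: "nat \<Rightarrow> real list \<Rightarrow> (nat \<Rightarrow> nat) \<Rightarrow> bool" where
  "is_sorting_perm N x \<sigma> \<longleftrightarrow>
     bij_betw \<sigma> {..<N} {..<N} \<and> (\<forall>k. Suc k < N \<longrightarrow> x ! (\<sigma> k) \<le> x ! (\<sigma> (Suc k)))"

text \<open>Measuring in the computational basis and reading the output register:
  outcome b yields the permutation out b.\<close>
definition success_prob ::
  "(state \<Rightarrow> state) \<Rightarrow> (basis \<Rightarrow> nat \<Rightarrow> nat) \<Rightarrow> nat \<Rightarrow> real list \<Rightarrow> nat \<Rightarrow> real" where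
  "success_prob U out N x T =
     infsum (\<lambda>b. (cmod (final_state U N x T b))\<^sup>2) {b. is_sorting_perm N x (out b)}"

end

theory Submission
  imports Defs "HOL-Combinatorics.Permutations"
begin

lemma mid_convex:
  fixes M c s :: real
  assumes M: "M > 0" and s: "0 < s" "s < c"
  shows "2 / ((M + c) * sqrt c) \<le> 1 / ((M + (c + s)) * sqrt (c + s)) + 1 / ((M + (c - s)) * sqrt (c - s))"
proof -
  define p q where "p = c + s" and "q = c - s"
  have p: "p > 0" and q: "q > 0" using s by (auto simp: p_def q_def)
  have c: "c > 0" using s by simp
  define up uq uc where "up = 1/(M+p)" and "uq = 1/(M+q)" and "uc = 1/(M+c)"
  define wp wq wc where "wp = 1/sqrt p" and "wq = 1/sqrt q" and "wc = 1/sqrt c"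
  have hu: "up + uq \<ge> 2 * uc"
  proof -
    have A: "M + c - s > 0" "M + c + s > 0" "M + c > 0" using s M by auto
    have "up + uq - 2 * uc = 2 * s^2 / ((M+c) * ((M+c+s) * (M+c-s)))"
    proof -
      have ne: "M + (c + s) \<noteq> 0" "M + (c - s) \<noteq> 0" "M + c \<noteq> 0" using A by auto
      show ?thesis unfolding up_def uq_def uc_def p_def q_def using ne A
        by (simp add: divide_simps) (simp add: algebra_simps power2_eq_square)
    qed
    also have "\<dots> \<ge> 0" using A by (intro divide_nonneg_nonneg) auto
    finally show ?thesis by simp
  qed
  have hw: "wp + wq \<ge> 2 * wc"
  proof -
    define al be ga where "al = sqrt p" and "be = sqrt q" and "ga = sqrt c"
    have pos: "al > 0" "be > 0" "ga > 0" using p q c by (auto simp: al_def be_def ga_def)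
    have sq: "al^2 + be^2 = 2 * ga^2" using p q c by (simp add: al_def be_def ga_def p_def q_def)
    have d: "0 \<le> (al-be)^2" by simp
    hence d2: "2*(al*be) \<le> al^2+be^2" by (simp add: power2_diff)
    have g1: "ga^2 \<ge> al * be" using d2 sq by simp
    have g2: "(al+be)^2 \<ge> 4 * (al*be)" using d2 by (simp add: power2_sum)
    have "(ga*(al+be))^2 \<ge> (2*(al*be))^2"
    proof -
      have "(ga*(al+be))^2 = ga^2 * (al+be)^2" by (simp add: power_mult_distrib)
      also have "\<dots> \<ge> (al*be) * (4*(al*be))" using g1 g2 pos
        by (intro mult_mono) auto
      finally show ?thesis by (simp add: power2_eq_square)
    qed
    hence "ga*(al+be) \<ge> 2*(al*be)" using pos
      by (meson power2_le_imp_le add_pos_pos less_eq_real_def mult_pos_pos)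
    thus ?thesis using pos
      by (simp add: wp_def wq_def wc_def al_def[symmetric] be_def[symmetric] ga_def[symmetric] field_simps)
  qed
  have hm: "(up - uq) * (wp - wq) \<ge> 0"
  proof -
    have "up \<le> uq" using p q M s by (simp add: up_def uq_def p_def q_def frac_le)
    moreover have "wp \<le> wq" using p q s by (simp add: wp_def wq_def p_def q_def frac_le)
    ultimately show ?thesis by (simp add: mult_nonpos_nonpos)
  qed
  have nn: "uc \<ge> 0" "wc \<ge> 0" using M c by (auto simp: uc_def wc_def)
  have "(2*uc) * (2*wc) \<le> (up+uq) * (wp+wq)"
    using hu hw nn by (intro mult_mono) auto
  hence "2 * (uc * wc) \<le> up * wp + uq * wq" using hm by (simp add: algebra_simps)
  thus ?thesis by (simp add: up_def uq_def uc_def wp_def wq_def wc_def p_def q_def)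
qed

definition Fh :: "real \<Rightarrow> real \<Rightarrow> real" where
  "Fh M x = 2 / sqrt M * arctan (sqrt x / sqrt M)"

lemma Fh_deriv:
  assumes M: "M > 0" and x: "x > 0"
  shows "(Fh M has_real_derivative 1 / ((M + x) * sqrt x)) (at x)"
proof -
  define r where "r = sqrt M"
  have r: "r > 0" "M = r^2" using M by (auto simp: r_def)
  have eq: "r*(r*(r*2)) / (r*(r*(r*(x*(sqrt x * 2)))) + r*(r*(r*(r*(r*(sqrt x * 2)))))) = 1/(x* sqrt x + r*(r* sqrt x))"
  proof -
    have "r*(r*(r*(x*(sqrt x * 2)))) + r*(r*(r*(r*(r*(sqrt x * 2))))) = (r*(r*(r*2))) * (x* sqrt x + r*(r* sqrt x))"
      by (simp add: algebra_simps)
    thus ?thesis using r by simp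
  qed
  show ?thesis unfolding Fh_def[abs_def] r(2)
    using x r real_sqrt_gt_zero[OF x] eq by (auto intro!: derivative_eq_intros simp: power_divide field_simps power2_eq_square)
qed

lemma Fh_cont: "M > 0 \<Longrightarrow> continuous_on {0..} (Fh M)"
  unfolding Fh_def[abs_def] by (intro continuous_intros) auto

lemma Fh_step:
  assumes M: "M > 0" and c: "c \<ge> 1/2"
  shows "1 / ((M + c) * sqrt c) \<le> Fh M (c + 1/2) - Fh M (c - 1/2)"
proof -
  define phi where "phi s = Fh M (c + s) - Fh M (c - s) - 2 * s * (1 / ((M + c) * sqrt c))" for s
  have "phi 0 \<le> phi (1/2)"
  proof (rule DERIV_nonneg_imp_increasing_open[of 0 "1/2"])
    fix s :: real assume s: "0 < s" "s < 1/2"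
    have d1: "((\<lambda>s. Fh M (c + s)) has_real_derivative 1 / ((M + (c+s)) * sqrt (c+s))) (at s)"
    proof -
      have h1: "(Fh M has_real_derivative 1 / ((M + (c+s)) * sqrt (c+s))) (at (c+s))"
        using Fh_deriv[OF M, of "c+s"] s c by simp
      have h2: "((\<lambda>s. c + s) has_real_derivative 1) (at s)" by (auto intro!: derivative_eq_intros)
      show ?thesis using DERIV_chain2[OF h1 h2] by simp
    qed
    have d2: "((\<lambda>s. Fh M (c - s)) has_real_derivative -(1 / ((M + (c-s)) * sqrt (c-s)))) (at s)"
    proof -
      have h1: "(Fh M has_real_derivative 1 / ((M + (c-s)) * sqrt (c-s))) (at (c-s))"
        using Fh_deriv[OF M, of "c-s"] s c by simp
      have h2: "((\<lambda>s. c - s) has_real_derivative -1) (at s)" by (auto intro!: derivative_eq_intros)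
      show ?thesis using DERIV_chain2[OF h1 h2] by simp
    qed
    have "(phi has_real_derivative
        1 / ((M + (c+s)) * sqrt (c+s)) - -(1 / ((M + (c-s)) * sqrt (c-s))) - 2 * (1 / ((M + c) * sqrt c))) (at s)"
          proof -
      have d3: "((\<lambda>s. 2 * s * (1 / ((M + c) * sqrt c))) has_real_derivative 2 * (1 / ((M + c) * sqrt c))) (at s)"
        using M c by (auto intro!: derivative_eq_intros)
      show ?thesis using DERIV_diff[OF DERIV_diff[OF d1 d2] d3] unfolding phi_def[abs_def] by simp
    qed
    moreover have "1 / ((M + (c+s)) * sqrt (c+s)) - -(1 / ((M + (c-s)) * sqrt (c-s))) - 2 * (1 / ((M + c) * sqrt c)) \<ge> 0"
      using mid_convex[OF M, of s c] s c by simp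
    ultimately show "\<exists>y. (phi has_real_derivative y) (at s) \<and> y \<ge> 0" by blast
  next
    have "continuous_on {0..1/2} (\<lambda>s. Fh M (c + s))"
      by (rule continuous_on_compose2[OF Fh_cont[OF M]]) (use c in \<open>auto intro!: continuous_intros\<close>)
    moreover have "continuous_on {0..1/2} (\<lambda>s. Fh M (c - s))"
      by (rule continuous_on_compose2[OF Fh_cont[OF M]]) (use c in \<open>auto intro!: continuous_intros\<close>)
    ultimately show "continuous_on {0..1/2} phi"
      unfolding phi_def[abs_def] by (intro continuous_intros)
  qed simp
  thus ?thesis by (simp add: phi_def)
qed

lemma Fh_sum:
  assumes M: "M > 0"
  shows "(\<Sum>n<K. 1 / ((M + (real n + 1/2)) * sqrt (real n + 1/2))) \<le> Fh M (real K)"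
proof (induction K)
  case 0 show ?case by (simp add: Fh_def)
next
  case (Suc K)
  have "Fh M (real K + 1/2 + 1/2) - Fh M (real K + 1/2 - 1/2) \<ge> 1 / ((M + (real K + 1/2)) * sqrt (real K + 1/2))"
    by (rule Fh_step[OF M]) simp
  moreover have "real (Suc K) = real K + 1/2 + 1/2" by simp
  ultimately show ?case using Suc by simp
qed

lemma hilbert_row:
  assumes M: "M > 0"
  shows "(\<Sum>n<K. sqrt M / ((M + (real n + 1/2)) * sqrt (real n + 1/2))) \<le> pi"
proof -
  have "(\<Sum>n<K. sqrt M / ((M + (real n + 1/2)) * sqrt (real n + 1/2)))
      = sqrt M * (\<Sum>n<K. 1 / ((M + (real n + 1/2)) * sqrt (real n + 1/2)))"
    by (simp add: sum_distrib_left)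
  also have "\<dots> \<le> sqrt M * Fh M (real K)"
    using Fh_sum[OF M] M by (intro mult_left_mono) auto
  also have "\<dots> = 2 * arctan (sqrt (real K) / sqrt M)" using M by (simp add: Fh_def)
  also have "\<dots> \<le> pi" using arctan_ubound[of "sqrt (real K) / sqrt M"] by simp
  finally show ?thesis .
qed


lemma amgm_sqrt:
  fixes x y p q :: real
  assumes "p > 0" "q > 0"
  shows "x * y \<le> (x^2 * (p / q) + y^2 * (q / p)) / 2"
proof -
  have "0 \<le> (x * p - y * q)^2" by simp
  hence "2 * (x*y) * (p*q) \<le> x^2 * p^2 + y^2 * q^2" by (simp add: power2_diff power_mult_distrib algebra_simps)
  thus ?thesis using assms by (simp add: field_simps power2_eq_square)
qed

lemma row_a:
  assumes "a \<le> v"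
  shows "(\<Sum>c<N. if v < c then sqrt (real v - real a + 1/2) /
            ((real v - real a + 1/2 + (real c - real v - 1/2)) * sqrt (real c - real v - 1/2)) else 0) \<le> pi"
proof -
  define M where "M = real v - real a + 1/2"
  have M: "M > 0" using assms by (simp add: M_def)
  have "(\<Sum>c<N. if v < c then sqrt M / ((M + (real c - real v - 1/2)) * sqrt (real c - real v - 1/2)) else 0)
      = (\<Sum>c\<in>{Suc v..<N}. sqrt M / ((M + (real c - real v - 1/2)) * sqrt (real c - real v - 1/2)))"
    by (subst sum.inter_filter[symmetric]) (auto intro!: sum.cong)
  also have "\<dots> = (\<Sum>n<N - Suc v. sqrt M / ((M + (real n + 1/2)) * sqrt (real n + 1/2)))"
    by (rule sum.reindex_bij_witness[of _ "\<lambda>n. n + Suc v" "\<lambda>c. c - Suc v"]) (auto simp: of_nat_diff)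
  also have "\<dots> \<le> pi" by (rule hilbert_row[OF M])
  finally show ?thesis unfolding M_def .
qed

lemma row_c:
  assumes "v < c"
  shows "(\<Sum>a<N. if a \<le> v then sqrt (real c - real v - 1/2) /
            ((real v - real a + 1/2 + (real c - real v - 1/2)) * sqrt (real v - real a + 1/2)) else 0) \<le> pi"
proof -
  define M where "M = real c - real v - 1/2"
  have M: "M > 0" using assms by (simp add: M_def)
  have "(\<Sum>a<N. if a \<le> v then sqrt M / ((real v - real a + 1/2 + M) * sqrt (real v - real a + 1/2)) else 0)
      = (\<Sum>a\<in>{..<N} \<inter> {..v}. sqrt M / ((M + (real v - real a + 1/2)) * sqrt (real v - real a + 1/2)))"
    by (subst sum.inter_filter[symmetric]) (auto intro!: sum.cong simp: add.commute Int_def)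
  also have "\<dots> \<le> (\<Sum>a\<in>{..v}. sqrt M / ((M + (real v - real a + 1/2)) * sqrt (real v - real a + 1/2)))"
    using M by (intro sum_mono2) auto
  also have "\<dots> = (\<Sum>n<Suc v. sqrt M / ((M + (real n + 1/2)) * sqrt (real n + 1/2)))"
    by (rule sum.reindex_bij_witness[of _ "\<lambda>n. v - n" "\<lambda>a. v - a"]) (auto simp: of_nat_diff)
  also have "\<dots> \<le> pi" by (rule hilbert_row[OF M])
  finally show ?thesis unfolding M_def .
qed

lemma hilbert_half:
  fixes r :: "nat \<Rightarrow> real"
  shows "(\<Sum>a<N. \<Sum>c<N. if a \<le> v \<and> v < c then r a * r c / (real c - real a) else 0)
           \<le> pi / 2 * (\<Sum>a<N. (r a)^2)"
proof -
  define Ma where "Ma a = real v - real a + 1/2" for a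
  define Nc where "Nc c = real c - real v - 1/2" for c
  define Aw where "Aw a c = sqrt (Ma a) / ((Ma a + Nc c) * sqrt (Nc c))" for a c
  define Bw where "Bw a c = sqrt (Nc c) / ((Ma a + Nc c) * sqrt (Ma a))" for a c
  have pt: "(if a \<le> v \<and> v < c then r a * r c / (real c - real a) else 0)
      \<le> ((r a)^2 * (if a \<le> v \<and> v < c then Aw a c else 0) + (r c)^2 * (if a \<le> v \<and> v < c then Bw a c else 0)) / 2" for a c
  proof (cases "a \<le> v \<and> v < c")
    case True
    have pos: "Ma a > 0" "Nc c > 0" using True by (auto simp: Ma_def Nc_def)
    have cm: "real c - real a = Ma a + Nc c" by (simp add: Ma_def Nc_def)
    have "r a * r c \<le> ((r a)^2 * (sqrt (Ma a) / sqrt (Nc c)) + (r c)^2 * (sqrt (Nc c) / sqrt (Ma a))) / 2"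
      by (rule amgm_sqrt) (use pos in auto)
    hence "r a * r c / (Ma a + Nc c) \<le> ((r a)^2 * (sqrt (Ma a) / sqrt (Nc c)) + (r c)^2 * (sqrt (Nc c) / sqrt (Ma a))) / 2 / (Ma a + Nc c)"
      using pos by (intro divide_right_mono) auto
    also have "\<dots> = ((r a)^2 * Aw a c + (r c)^2 * Bw a c) / 2"
    proof -
      have g: "((x * (p / q) + y * (q / p)) / 2 / S) = (x * (p / (S * q)) + y * (q / (S * p))) / 2"
        if "p > 0" "q > 0" "S > 0" for x y p q S :: real
        using that by (simp add: field_simps)
      show ?thesis unfolding Aw_def Bw_def
        by (rule g) (use pos in auto)
    qed
    finally show ?thesis using True cm by simp
  qed auto
  have "(\<Sum>a<N. \<Sum>c<N. if a \<le> v \<and> v < c then r a * r c / (real c - real a) else 0)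
      \<le> (\<Sum>a<N. \<Sum>c<N. ((r a)^2 * (if a \<le> v \<and> v < c then Aw a c else 0) + (r c)^2 * (if a \<le> v \<and> v < c then Bw a c else 0)) / 2)"
    by (intro sum_mono pt)
  also have "\<dots> = ((\<Sum>a<N. (r a)^2 * (\<Sum>c<N. if a \<le> v \<and> v < c then Aw a c else 0))
      + (\<Sum>c<N. (r c)^2 * (\<Sum>a<N. if a \<le> v \<and> v < c then Bw a c else 0))) / 2"
  proof -
    have e1: "(\<Sum>a<N. \<Sum>c<N. (r c)^2 * (if a \<le> v \<and> v < c then Bw a c else 0))
        = (\<Sum>c<N. (r c)^2 * (\<Sum>a<N. if a \<le> v \<and> v < c then Bw a c else 0))"
      by (subst sum.swap) (simp add: sum_distrib_left)
    have e2: "(\<Sum>a<N. \<Sum>c<N. (r a)^2 * (if a \<le> v \<and> v < c then Aw a c else 0))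
        = (\<Sum>a<N. (r a)^2 * (\<Sum>c<N. if a \<le> v \<and> v < c then Aw a c else 0))"
      by (simp add: sum_distrib_left)
    show ?thesis
      by (simp only: sum_divide_distrib[symmetric] sum.distrib e1 e2)
  qed
  also have "\<dots> \<le> ((\<Sum>a<N. (r a)^2 * (if a \<le> v then pi else 0)) + (\<Sum>c<N. (r c)^2 * (if v < c then pi else 0))) / 2"
  proof -
    have "(\<Sum>c<N. if a \<le> v \<and> v < c then Aw a c else 0) \<le> (if a \<le> v then pi else 0)" for a
    proof (cases "a \<le> v")
      case True
      thus ?thesis unfolding Aw_def Ma_def Nc_def using row_a[OF True, of N] by simp
    qed simp
    moreover have "(\<Sum>a<N. if a \<le> v \<and> v < c then Bw a c else 0) \<le> (if v < c then pi else 0)" for c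
    proof (cases "v < c")
      case True
      thus ?thesis unfolding Bw_def Ma_def Nc_def using row_c[OF True, of N] by simp
    qed simp
    ultimately show ?thesis
      by (intro divide_right_mono add_mono sum_mono mult_left_mono) auto
  qed
  also have "\<dots> = pi / 2 * (\<Sum>a<N. (r a)^2)"
  proof -
    have "(\<Sum>a<N. (r a)^2 * (if a \<le> v then pi else 0)) + (\<Sum>c<N. (r c)^2 * (if v < c then pi else 0))
        = (\<Sum>a<N. pi * (r a)^2)"
      by (subst sum.distrib[symmetric]) (intro sum.cong; auto)
    moreover have "(\<Sum>a<N. pi * (r a)^2) = pi * (\<Sum>a<N. (r a)^2)" by (simp add: sum_distrib_left)
    ultimately show ?thesis by simp
  qed
  finally show ?thesis .
qed

lemma hilbert_form:
  fixes r :: "nat \<Rightarrow> real"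
  shows "(\<Sum>a<N. \<Sum>c<N. if (a \<le> v) \<noteq> (c \<le> v) then r a * r c / \<bar>real a - real c\<bar> else 0)
           \<le> pi * (\<Sum>a<N. (r a)^2)"
proof -
  have pt: "(if (a \<le> v) \<noteq> (c \<le> v) then r a * r c / \<bar>real a - real c\<bar> else 0)
     = (if a \<le> v \<and> v < c then r a * r c / (real c - real a) else 0)
     + (if c \<le> v \<and> v < a then r c * r a / (real a - real c) else 0)" for a c
    by (auto simp: abs_if mult.commute)
  have "(\<Sum>a<N. \<Sum>c<N. if (a \<le> v) \<noteq> (c \<le> v) then r a * r c / \<bar>real a - real c\<bar> else 0)
     = (\<Sum>a<N. \<Sum>c<N. if a \<le> v \<and> v < c then r a * r c / (real c - real a) else 0)
     + (\<Sum>c<N. \<Sum>a<N. if c \<le> v \<and> v < a then r c * r a / (real a - real c) else 0)"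
  proof -
    have "(\<Sum>a<N. \<Sum>c<N. if c \<le> v \<and> v < a then r c * r a / (real a - real c) else 0)
       = (\<Sum>c<N. \<Sum>a<N. if c \<le> v \<and> v < a then r c * r a / (real a - real c) else 0)"
      by (rule sum.swap)
    thus ?thesis by (simp only: pt sum.distrib)
  qed
  also have "\<dots> \<le> pi / 2 * (\<Sum>a<N. (r a)^2) + pi / 2 * (\<Sum>a<N. (r a)^2)"
    by (intro add_mono hilbert_half)
  finally show ?thesis by simp
qed


definition rp :: "complex \<Rightarrow> complex \<Rightarrow> real" where
  "rp a b = Re (cnj a * b)"

definition ip :: "state \<Rightarrow> state \<Rightarrow> real" where
  "ip \<psi> \<phi> = infsum (\<lambda>b. rp (\<psi> b) (\<phi> b)) UNIV"

lemma infsum_diff_real: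
  fixes f g :: "'a \<Rightarrow> real"
  assumes "f summable_on A" "g summable_on A"
  shows "infsum (\<lambda>x. f x - g x) A = infsum f A - infsum g A"
proof -
  have "(\<lambda>x. - g x) summable_on A" using assms(2) summable_on_uminus by blast
  hence "infsum (\<lambda>x. f x + - g x) A = infsum f A + infsum (\<lambda>x. - g x) A"
    using infsum_add[OF assms(1)] by blast
  thus ?thesis by (simp add: infsum_uminus)
qed

lemma summable_on_diff_real:
  fixes f g :: "'a \<Rightarrow> real"
  assumes "f summable_on A" "g summable_on A"
  shows "(\<lambda>x. f x - g x) summable_on A"
proof -
  have "(\<lambda>x. - g x) summable_on A" using assms(2) summable_on_uminus by blast
  from summable_on_add[OF assms(1) this] show ?thesis by simp
qed

lemma l2_sq_summable: "\<psi> \<in> l2 \<Longrightarrow> (\<lambda>b. (cmod (\<psi> b))\<^sup>2) summable_on UNIV"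
  by (simp add: l2_def)

lemma cmod_add_sq_le: "(cmod (a + b))\<^sup>2 \<le> 2 * (cmod a)\<^sup>2 + 2 * (cmod b)\<^sup>2"
proof -
  have "cmod (a + b) \<le> cmod a + cmod b" by (rule norm_triangle_ineq)
  hence "(cmod (a + b))\<^sup>2 \<le> (cmod a + cmod b)\<^sup>2" by (simp add: power_mono)
  also have "\<dots> \<le> 2 * (cmod a)\<^sup>2 + 2 * (cmod b)\<^sup>2"
    using zero_le_power2[of "cmod a - cmod b"] by (simp add: power2_sum power2_diff)
  finally show ?thesis .
qed

lemma l2_add: assumes "\<psi> \<in> l2" "\<phi> \<in> l2" shows "(\<lambda>b. \<psi> b + \<phi> b) \<in> l2"
proof -
  have "(\<lambda>b. 2 * (cmod (\<psi> b))\<^sup>2 + 2 * (cmod (\<phi> b))\<^sup>2) summable_on UNIV"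
    using assms by (intro summable_on_add summable_on_cmult_right) (auto simp: l2_def)
  hence "(\<lambda>b. (cmod (\<psi> b + \<phi> b))\<^sup>2) summable_on UNIV"
    by (rule summable_on_comparison_test) (auto simp: cmod_add_sq_le)
  thus ?thesis by (simp add: l2_def)
qed

lemma prod_summable:
  assumes "\<psi> \<in> l2" "\<phi> \<in> l2"
  shows "(\<lambda>b. cmod (\<psi> b) * cmod (\<phi> b)) summable_on UNIV"
proof -
  have "(\<lambda>b. (cmod (\<psi> b))\<^sup>2 + (cmod (\<phi> b))\<^sup>2) summable_on UNIV"
    using assms by (intro summable_on_add) (auto simp: l2_def)
  thus ?thesis
  proof (rule summable_on_comparison_test)
    fix b
    define A B where "A = cmod (\<psi> b)" and "B = cmod (\<phi> b)"
    have "0 \<le> (A - B)^2" by simp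
    hence "2 * (A * B) \<le> A^2 + B^2" by (simp add: power2_diff mult.assoc)
    moreover have "0 \<le> A * B" by (simp add: A_def B_def)
    ultimately show "cmod (\<psi> b) * cmod (\<phi> b) \<le> (cmod (\<psi> b))\<^sup>2 + (cmod (\<phi> b))\<^sup>2"
      unfolding A_def B_def by linarith
  qed auto
qed

lemma prod_summable_if:
  assumes "\<psi> \<in> l2" "\<phi> \<in> l2"
  shows "(\<lambda>b. if D b then cmod (\<psi> b) * cmod (\<phi> b) else 0) summable_on UNIV"
  using prod_summable[OF assms] by (rule summable_on_comparison_test) auto

lemma real_summable_bound:
  fixes f g :: "'a \<Rightarrow> real"
  assumes "g summable_on A" "\<And>x. x \<in> A \<Longrightarrow> \<bar>f x\<bar> \<le> g x"
  shows "f summable_on A"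
proof -
  have "(\<lambda>x. norm (g x)) summable_on A" using assms(1) summable_on_iff_abs_summable_on_real by blast
  moreover have "\<And>x. x \<in> A \<Longrightarrow> norm (f x) \<le> norm (g x)" using assms(2) by fastforce
  ultimately have "(\<lambda>x. norm (f x)) summable_on A" by (rule Infinite_Sum.abs_summable_on_comparison_test)
  thus ?thesis using summable_on_iff_abs_summable_on_real by blast
qed

lemma abs_Re_cnj_le: "\<bar>rp a b\<bar> \<le> cmod a * cmod b"
  using abs_Re_le_cmod[of "cnj a * b"] by (simp add: norm_mult rp_def)

lemma re_summable:
  assumes "\<psi> \<in> l2" "\<phi> \<in> l2"
  shows "(\<lambda>b. rp (\<psi> b) (\<phi> b)) summable_on UNIV"
  by (rule real_summable_bound[OF prod_summable[OF assms]]) (rule abs_Re_cnj_le)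

lemma rp_self: "rp a a = (cmod a)\<^sup>2"
  by (simp add: rp_def) (metis cmod_power2 power2_eq_square)

lemma rp_sign: "rp ((if P then -1 else 1) * a) ((if Q then -1 else 1) * b) = (if P = Q then rp a b else - rp a b)"
  by (cases P; cases Q) (auto simp: rp_def)

lemma cmod_add_sq: "(cmod (a + b))\<^sup>2 = (cmod a)\<^sup>2 + (cmod b)\<^sup>2 + 2 * rp a b"
  by (simp add: cmod_power2 power2_sum algebra_simps rp_def)

lemma sqnorm_add:
  assumes "\<psi> \<in> l2" "\<phi> \<in> l2"
  shows "sqnorm (\<lambda>b. \<psi> b + \<phi> b) = sqnorm \<psi> + sqnorm \<phi> + 2 * ip \<psi> \<phi>"
proof -
  have s1: "(\<lambda>b. (cmod (\<psi> b))\<^sup>2) summable_on UNIV" "(\<lambda>b. (cmod (\<phi> b))\<^sup>2) summable_on UNIV"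
    using assms by (auto simp: l2_def)
  have s2: "(\<lambda>b. 2 * rp (\<psi> b) (\<phi> b)) summable_on UNIV"
    using re_summable[OF assms] by (rule summable_on_cmult_right)
  have "sqnorm (\<lambda>b. \<psi> b + \<phi> b) = infsum (\<lambda>b. ((cmod (\<psi> b))\<^sup>2 + (cmod (\<phi> b))\<^sup>2) + 2 * rp (\<psi> b) (\<phi> b)) UNIV"
    unfolding sqnorm_def by (simp add: cmod_add_sq)
  also have "\<dots> = infsum (\<lambda>b. (cmod (\<psi> b))\<^sup>2 + (cmod (\<phi> b))\<^sup>2) UNIV + infsum (\<lambda>b. 2 * rp (\<psi> b) (\<phi> b)) UNIV"
    by (rule infsum_add[OF summable_on_add[OF s1] s2])
  also have "\<dots> = sqnorm \<psi> + sqnorm \<phi> + 2 * ip \<psi> \<phi>"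
    unfolding sqnorm_def ip_def
    by (simp add: infsum_add[OF s1] infsum_cmult_right[OF re_summable[OF assms]])
  finally show ?thesis .
qed

lemma ip_self: "ip \<psi> \<psi> = sqnorm \<psi>"
  unfolding ip_def sqnorm_def by (simp add: rp_self)

lemma unitary_ip:
  assumes U: "is_unitary U" and "\<psi> \<in> l2" "\<phi> \<in> l2"
  shows "ip (U \<psi>) (U \<phi>) = ip \<psi> \<phi>"
proof -
  have l: "U \<psi> \<in> l2" "U \<phi> \<in> l2" using U assms unfolding is_unitary_def by blast+
  have add: "U (\<lambda>b. \<psi> b + \<phi> b) = (\<lambda>b. U \<psi> b + U \<phi> b)" using U assms unfolding is_unitary_def by blast
  have n: "sqnorm (U \<psi>) = sqnorm \<psi>" "sqnorm (U \<phi>) = sqnorm \<phi>"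
    "sqnorm (U (\<lambda>b. \<psi> b + \<phi> b)) = sqnorm (\<lambda>b. \<psi> b + \<phi> b)"
    using U assms l2_add[OF assms(2,3)] unfolding is_unitary_def by blast+
  have "sqnorm (\<lambda>b. U \<psi> b + U \<phi> b) = sqnorm (U \<psi>) + sqnorm (U \<phi>) + 2 * ip (U \<psi>) (U \<phi>)"
    by (rule sqnorm_add[OF l])
  moreover have "sqnorm (\<lambda>b. \<psi> b + \<phi> b) = sqnorm \<psi> + sqnorm \<phi> + 2 * ip \<psi> \<phi>"
    by (rule sqnorm_add[OF assms(2,3)])
  ultimately show ?thesis using n add by simp
qed

lemma unitary_l2: "is_unitary U \<Longrightarrow> \<psi> \<in> l2 \<Longrightarrow> U \<psi> \<in> l2"
  unfolding is_unitary_def by blast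

lemma unitary_sqnorm: "is_unitary U \<Longrightarrow> \<psi> \<in> l2 \<Longrightarrow> sqnorm (U \<psi>) = sqnorm \<psi>"
  unfolding is_unitary_def by blast

lemma cmod_cmp_op: "cmod (cmp_op N x \<psi> b) = cmod (\<psi> b)"
  by (cases b) (auto simp: cmp_op_def norm_mult)

lemma cmp_op_l2: "\<psi> \<in> l2 \<Longrightarrow> cmp_op N x \<psi> \<in> l2"
  by (simp add: l2_def cmod_cmp_op)

lemma cmp_op_sqnorm: "sqnorm (cmp_op N x \<psi>) = sqnorm \<psi>"
  by (simp add: sqnorm_def cmod_cmp_op)

definition Dif :: "nat \<Rightarrow> real list \<Rightarrow> real list \<Rightarrow> basis \<Rightarrow> bool" where
  "Dif N x y b = (cmp_bit N x (fst (snd b)) (snd (snd b)) \<noteq> cmp_bit N y (fst (snd b)) (snd (snd b)))"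

lemma oracle_diff:
  assumes "\<psi> \<in> l2" "\<phi> \<in> l2"
  shows "ip \<psi> \<phi> - ip (cmp_op N x \<psi>) (cmp_op N y \<phi>)
     \<le> 2 * infsum (\<lambda>b. if Dif N x y b then cmod (\<psi> b) * cmod (\<phi> b) else 0) UNIV"
proof -
  have l: "cmp_op N x \<psi> \<in> l2" "cmp_op N y \<phi> \<in> l2" using assms cmp_op_l2 by auto
  have pt: "rp (\<psi> b) (\<phi> b) - rp (cmp_op N x \<psi> b) (cmp_op N y \<phi> b)
      \<le> 2 * (if Dif N x y b then cmod (\<psi> b) * cmod (\<phi> b) else 0)" for b
  proof -
    obtain z i i' where b: "b = (z, i, i')" by (cases b) auto
    have e: "rp (cmp_op N x \<psi> b) (cmp_op N y \<phi> b) = (if Dif N x y b then - rp (\<psi> b) (\<phi> b) else rp (\<psi> b) (\<phi> b))"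
      by (simp add: b cmp_op_def Dif_def rp_sign)
    show ?thesis
      using abs_Re_cnj_le[of "\<psi> b" "\<phi> b"] unfolding e by auto
  qed
  have "ip \<psi> \<phi> - ip (cmp_op N x \<psi>) (cmp_op N y \<phi>)
     = infsum (\<lambda>b. rp (\<psi> b) (\<phi> b) - rp (cmp_op N x \<psi> b) (cmp_op N y \<phi> b)) UNIV"
    unfolding ip_def by (rule infsum_diff_real[symmetric]) (intro re_summable assms l)+
  also have "\<dots> \<le> infsum (\<lambda>b. 2 * (if Dif N x y b then cmod (\<psi> b) * cmod (\<phi> b) else 0)) UNIV"
    by (intro infsum_mono pt summable_on_diff_real re_summable assms l summable_on_cmult_right prod_summable_if)
  also have "\<dots> = 2 * infsum (\<lambda>b. if Dif N x y b then cmod (\<psi> b) * cmod (\<phi> b) else 0) UNIV"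
    by (rule infsum_cmult_right) (rule prod_summable_if[OF assms])
  finally show ?thesis .
qed

lemma ip_abs_le:
  assumes "\<psi> \<in> l2" "\<phi> \<in> l2"
  shows "\<bar>ip \<psi> \<phi>\<bar> \<le> infsum (\<lambda>b. cmod (\<psi> b) * cmod (\<phi> b)) UNIV"
proof -
  have "ip \<psi> \<phi> \<le> infsum (\<lambda>b. cmod (\<psi> b) * cmod (\<phi> b)) UNIV"
    unfolding ip_def
  proof (rule infsum_mono)
    show "(\<lambda>b. rp (\<psi> b) (\<phi> b)) summable_on UNIV" by (rule re_summable[OF assms])
    show "(\<lambda>b. cmod (\<psi> b) * cmod (\<phi> b)) summable_on UNIV" by (rule prod_summable[OF assms])
    fix b show "rp (\<psi> b) (\<phi> b) \<le> cmod (\<psi> b) * cmod (\<phi> b)" using abs_Re_cnj_le[of "\<psi> b" "\<phi> b"] by linarith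
  qed
  moreover have neg: "infsum (\<lambda>b. - rp (\<psi> b) (\<phi> b)) UNIV = - ip \<psi> \<phi>"
    unfolding ip_def by (rule infsum_uminus)
  have "infsum (\<lambda>b. - rp (\<psi> b) (\<phi> b)) UNIV \<le> infsum (\<lambda>b. cmod (\<psi> b) * cmod (\<phi> b)) UNIV"
  proof (rule infsum_mono)
    show "(\<lambda>b. - rp (\<psi> b) (\<phi> b)) summable_on UNIV" by (rule summable_on_uminus[THEN iffD2, OF re_summable[OF assms]])
    show "(\<lambda>b. cmod (\<psi> b) * cmod (\<phi> b)) summable_on UNIV" by (rule prod_summable[OF assms])
    fix b show "- rp (\<psi> b) (\<phi> b) \<le> cmod (\<psi> b) * cmod (\<phi> b)" using abs_Re_cnj_le[of "\<psi> b" "\<phi> b"] by linarith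
  qed
  ultimately show ?thesis using neg by linarith
qed

lemma ket0_l2: "ket0 \<in> l2" and ket0_sqnorm: "sqnorm ket0 = 1"
proof -
  have e: "(\<lambda>b. (cmod (ket0 b))\<^sup>2) = (\<lambda>b. if b = (0,0,0) then 1 else 0)"
    by (auto simp: ket0_def)
  have "((\<lambda>b. if b = (0,0,0) then 1 else (0::real)) has_sum 1) UNIV"
    by (rule has_sum_finite_neutralI[of "{(0,0,0)}"]) auto
  hence "((\<lambda>b. (cmod (ket0 b))\<^sup>2) has_sum 1) UNIV" unfolding e .
  thus "ket0 \<in> l2" "sqnorm ket0 = 1" unfolding l2_def sqnorm_def
    by (auto simp: summable_on_def infsumI)
qed


lemma fs_Suc: "final_state U N x (Suc t) = U (cmp_op N x (final_state U N x t))"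
  by (simp add: final_state_def)

lemma fs_l2: "is_unitary U \<Longrightarrow> final_state U N x t \<in> l2 \<and> sqnorm (final_state U N x t) = 1"
proof (induction t)
  case 0
  then show ?case using ket0_l2 ket0_sqnorm unitary_l2 unitary_sqnorm by (simp add: final_state_def)
next
  case (Suc t)
  then show ?case using unitary_l2 unitary_sqnorm cmp_op_l2 cmp_op_sqnorm by (simp add: fs_Suc)
qed

lemma sq_summable_if:
  assumes "\<psi> \<in> l2"
  shows "(\<lambda>b. if b \<in> A then (cmod (\<psi> b))\<^sup>2 else 0) summable_on UNIV"
  using l2_sq_summable[OF assms] by (rule summable_on_comparison_test) auto

lemma infsum_if_set:
  fixes f :: "'a \<Rightarrow> real"
  shows "infsum (\<lambda>b. if b \<in> A then f b else 0) UNIV = infsum f A"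
  by (rule infsum_cong_neutral) auto

lemma sq_compl:
  assumes "\<psi> \<in> l2" "sqnorm \<psi> = 1"
  shows "infsum (\<lambda>b. (cmod (\<psi> b))\<^sup>2) (- A) = 1 - infsum (\<lambda>b. (cmod (\<psi> b))\<^sup>2) A"
proof -
  have s: "(\<lambda>b. (cmod (\<psi> b))\<^sup>2) summable_on A" "(\<lambda>b. (cmod (\<psi> b))\<^sup>2) summable_on (- A)"
    using l2_sq_summable[OF assms(1)] by (auto intro: summable_on_subset_banach)
  have "infsum (\<lambda>b. (cmod (\<psi> b))\<^sup>2) (A \<union> - A) = infsum (\<lambda>b. (cmod (\<psi> b))\<^sup>2) A + infsum (\<lambda>b. (cmod (\<psi> b))\<^sup>2) (- A)"
    by (rule infsum_Un_disjoint[OF s]) auto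
  moreover have "A \<union> - A = UNIV" by auto
  ultimately show ?thesis using assms(2) by (simp add: sqnorm_def)
qed

lemma sq_mono_set:
  assumes "\<psi> \<in> l2" "A \<subseteq> B"
  shows "infsum (\<lambda>b. (cmod (\<psi> b))\<^sup>2) A \<le> infsum (\<lambda>b. (cmod (\<psi> b))\<^sup>2) B"
proof (rule infsum_mono_neutral)
  show "(\<lambda>b. (cmod (\<psi> b))\<^sup>2) summable_on A" "(\<lambda>b. (cmod (\<psi> b))\<^sup>2) summable_on B"
    using l2_sq_summable[OF assms(1)] by (auto intro: summable_on_subset_banach)
qed (use assms in auto)

lemma pair_bound_st:
  assumes l: "\<psi> \<in> l2" "\<phi> \<in> l2" and n: "sqnorm \<psi> = 1" "sqnorm \<phi> = 1"
    and disj: "A \<inter> B = {}"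
    and hA: "infsum (\<lambda>b. (cmod (\<psi> b))\<^sup>2) A \<ge> 1 - eps"
    and hB: "infsum (\<lambda>b. (cmod (\<phi> b))\<^sup>2) B \<ge> 1 - eps"
    and st: "0 < s" "s \<le> t"
  shows "ip \<psi> \<phi> \<le> (s * (1 - eps) + t * eps + (1 - eps) / t + eps / s) / 2"
proof -
  define f where "f = (\<lambda>b. (cmod (\<psi> b))\<^sup>2)"
  define g where "g = (\<lambda>b. (cmod (\<phi> b))\<^sup>2)"
  define al where "al = infsum f A"
  define be where "be = infsum g A"
  have t: "t > 0" using st by simp
  have fs: "f summable_on UNIV" "g summable_on UNIV" using l by (auto simp: f_def g_def l2_def)
  have fA: "(\<lambda>b. if b \<in> A then f b else 0) summable_on UNIV" "(\<lambda>b. if b \<in> A then g b else 0) summable_on UNIV"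
    using sq_summable_if[OF l(1), of A] sq_summable_if[OF l(2), of A] unfolding f_def g_def by auto
  have beB: "be \<le> eps"
  proof -
    have "be \<le> infsum g (- B)" unfolding be_def g_def by (rule sq_mono_set[OF l(2)]) (use disj in auto)
    also have "\<dots> = 1 - infsum g B" unfolding g_def by (rule sq_compl[OF l(2) n(2)])
    finally show ?thesis using hB by (simp add: g_def)
  qed
  have alA: "al \<ge> 1 - eps" using hA by (simp add: al_def f_def)
  define h where "h b = (if b \<in> A then s else t)" for b
  have hpos: "h b > 0" for b using st by (simp add: h_def)
  have pt: "cmod (\<psi> b) * cmod (\<phi> b) \<le> (h b * f b + g b / h b) / 2" for b
  proof -
    define A B where "A = cmod (\<psi> b)" and "B = cmod (\<phi> b)"
    have "0 \<le> (h b * A - B)^2" by simp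
    hence k: "2 * (h b * (A * B)) \<le> h b * (h b * A^2) + B^2"
      by (simp add: power2_diff power_mult_distrib power2_eq_square algebra_simps)
    have "A * B \<le> (h b * A^2 + B^2 / h b) / 2"
      using hpos[of b] k by (simp add: field_simps power2_eq_square)
    thus ?thesis by (simp add: f_def g_def A_def B_def)
  qed
  have e1: "(\<lambda>b. h b * f b) = (\<lambda>b. t * f b + (s - t) * (if b \<in> A then f b else 0))"
    by (auto simp: h_def algebra_simps)
  have e2: "(\<lambda>b. g b / h b) = (\<lambda>b. (1/t) * g b + (1/s - 1/t) * (if b \<in> A then g b else 0))"
    by (auto simp: h_def field_simps)
  have s1: "(\<lambda>b. h b * f b) summable_on UNIV" unfolding e1
    by (intro summable_on_add summable_on_cmult_right fs fA)
  have s2: "(\<lambda>b. g b / h b) summable_on UNIV" unfolding e2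
    by (intro summable_on_add summable_on_cmult_right fs fA)
  have f1: "infsum f UNIV = 1" "infsum g UNIV = 1" using n by (simp_all add: f_def g_def sqnorm_def)
  have fA1: "infsum (\<lambda>b. if b \<in> A then f b else 0) UNIV = al"
    "infsum (\<lambda>b. if b \<in> A then g b else 0) UNIV = be"
    by (simp_all add: infsum_if_set al_def be_def)
  have i1: "infsum (\<lambda>b. h b * f b) UNIV = t + (s - t) * al"
  proof -
    have "infsum (\<lambda>b. h b * f b) UNIV = infsum (\<lambda>b. t * f b) UNIV + infsum (\<lambda>b. (s - t) * (if b \<in> A then f b else 0)) UNIV"
      unfolding e1 by (intro infsum_add summable_on_cmult_right fs fA)
    also have "\<dots> = t * infsum f UNIV + (s - t) * infsum (\<lambda>b. if b \<in> A then f b else 0) UNIV"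
      by (simp only: infsum_cmult_right')
    finally show ?thesis using f1 fA1 by simp
  qed
  have i2: "infsum (\<lambda>b. g b / h b) UNIV = 1/t + (1/s - 1/t) * be"
  proof -
    have "infsum (\<lambda>b. g b / h b) UNIV = infsum (\<lambda>b. (1/t) * g b) UNIV + infsum (\<lambda>b. (1/s - 1/t) * (if b \<in> A then g b else 0)) UNIV"
      unfolding e2 by (intro infsum_add summable_on_cmult_right fs fA)
    also have "\<dots> = (1/t) * infsum g UNIV + (1/s - 1/t) * infsum (\<lambda>b. if b \<in> A then g b else 0) UNIV"
      by (simp only: infsum_cmult_right')
    finally show ?thesis using f1 fA1 by simp
  qed
  have "ip \<psi> \<phi> \<le> infsum (\<lambda>b. cmod (\<psi> b) * cmod (\<phi> b)) UNIV"
    using ip_abs_le[OF l] by linarith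
  also have "\<dots> \<le> infsum (\<lambda>b. (h b * f b + g b / h b) / 2) UNIV"
  proof (rule infsum_mono)
    have "(\<lambda>b. (1/2) * (h b * f b + g b / h b)) summable_on UNIV"
      by (intro summable_on_cmult_right summable_on_add s1 s2)
    thus "(\<lambda>b. (h b * f b + g b / h b) / 2) summable_on UNIV" by simp
  qed (intro prod_summable l, rule pt)
  also have "\<dots> = (infsum (\<lambda>b. h b * f b) UNIV + infsum (\<lambda>b. g b / h b) UNIV) / 2"
  proof -
    have "infsum (\<lambda>b. (h b * f b + g b / h b) / 2) UNIV = infsum (\<lambda>b. (1/2) * (h b * f b + g b / h b)) UNIV"
      by simp
    also have "\<dots> = (1/2) * infsum (\<lambda>b. h b * f b + g b / h b) UNIV" by (rule infsum_cmult_right')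
    also have "\<dots> = (1/2) * (infsum (\<lambda>b. h b * f b) UNIV + infsum (\<lambda>b. g b / h b) UNIV)"
      by (simp add: infsum_add s1 s2)
    finally show ?thesis by simp
  qed
  also have "\<dots> = (t + (s - t) * al + (1/t + (1/s - 1/t) * be)) / 2" by (simp add: i1 i2)
  also have "\<dots> \<le> (t + (s - t) * (1 - eps) + (1/t + (1/s - 1/t) * eps)) / 2"
  proof -
    have "(s - t) * al \<le> (s - t) * (1 - eps)" using st alA by (intro mult_left_mono_neg) auto
    moreover have "(1/s - 1/t) * be \<le> (1/s - 1/t) * eps" using st beB
      by (intro mult_left_mono) (auto simp: field_simps)
    ultimately show ?thesis by (simp only: divide_right_mono add_mono add_left_mono)
  qed
  also have "\<dots> = (s * (1 - eps) + t * eps + (1 - eps) / t + eps / s) / 2"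
    using st t by (simp add: field_simps)
  finally show ?thesis .
qed

lemma pair_bound:
  assumes l: "\<psi> \<in> l2" "\<phi> \<in> l2" and n: "sqnorm \<psi> = 1" "sqnorm \<phi> = 1"
    and disj: "A \<inter> B = {}"
    and hA: "infsum (\<lambda>b. (cmod (\<psi> b))\<^sup>2) A \<ge> 1 - eps"
    and hB: "infsum (\<lambda>b. (cmod (\<phi> b))\<^sup>2) B \<ge> 1 - eps"
    and e: "0 \<le> eps" "eps < 1/2"
  shows "ip \<psi> \<phi> \<le> 2 * sqrt (eps * (1 - eps))"
proof (cases "eps = 0")
  case True
  have "ip \<psi> \<phi> \<le> d" if d: "d > 0" for d
  proof -
    have "d \<le> 1 / d \<or> 1/d \<le> d" by linarith
    have "ip \<psi> \<phi> \<le> (min d (1/d) * (1 - eps) + max d (1/d) * eps + (1 - eps) / max d (1/d) + eps / min d (1/d)) / 2"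
      by (rule pair_bound_st[OF l n disj hA hB]) (use d in \<open>auto simp: min_def\<close>)
    also have "\<dots> = (min d (1/d) + 1 / max d (1/d)) / 2" using True by simp
    also have "\<dots> \<le> d" using d by (auto simp: min_def max_def field_simps)
    finally show ?thesis .
  qed
  hence "ip \<psi> \<phi> \<le> 0" by (meson dense not_le)
  thus ?thesis using True by simp
next
  case False
  hence ep: "eps > 0" using e by simp
  have e1: "1 - eps > 0" using e by simp
  define s t where "s = sqrt eps / sqrt (1 - eps)" and "t = sqrt (1 - eps) / sqrt eps"
  have sp: "s > 0" using ep e1 by (simp add: s_def)
  have st: "s \<le> t"
  proof -
    have "sqrt eps \<le> sqrt (1 - eps)" using e by simp
    thus ?thesis using ep e1 unfolding s_def t_def
      by (simp add: field_simps)
  qed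
  have "ip \<psi> \<phi> \<le> (s * (1 - eps) + t * eps + (1 - eps) / t + eps / s) / 2"
    by (rule pair_bound_st[OF l n disj hA hB sp st])
  also have "\<dots> = 2 * sqrt (eps * (1 - eps))"
  proof -
    have a: "sqrt eps * sqrt eps = eps" "sqrt (1 - eps) * sqrt (1 - eps) = 1 - eps" using ep e1 by simp_all
    have "s * (1 - eps) = sqrt eps * sqrt (1 - eps)" using a e1 by (simp add: s_def field_simps)
    moreover have "t * eps = sqrt eps * sqrt (1 - eps)" using a ep by (simp add: t_def field_simps)
    moreover have "(1 - eps) / t = sqrt eps * sqrt (1 - eps)" using a ep e1 by (simp add: t_def field_simps)
    moreover have "eps / s = sqrt eps * sqrt (1 - eps)" using a ep e1 by (simp add: s_def field_simps)
    ultimately show ?thesis by (simp add: real_sqrt_mult)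
  qed
  finally show ?thesis .
qed


definition ins :: "nat \<Rightarrow> nat \<Rightarrow> nat" where "ins a v = (if v < a then v else Suc v)"
definition del :: "nat \<Rightarrow> nat \<Rightarrow> nat" where "del j k = (if k < j then k else k - 1)"
definition sig :: "nat \<Rightarrow> (nat \<Rightarrow> nat) \<Rightarrow> nat \<Rightarrow> nat \<Rightarrow> nat" where
  "sig j p a k = (if k = j then a else ins a (p (del j k)))"
definition Xl :: "nat \<Rightarrow> nat \<Rightarrow> (nat \<Rightarrow> nat) \<Rightarrow> nat \<Rightarrow> real list" where
  "Xl N j p a = map (\<lambda>k. real (sig j p a k)) [0..<N]"

lemma ins_neq: "ins a v \<noteq> a" by (simp add: ins_def)
lemma ins_inj: "ins a u = ins a v \<longleftrightarrow> u = v" by (auto simp: ins_def)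
lemma ins_less: "ins a u < ins a v \<longleftrightarrow> u < v" by (auto simp: ins_def)
lemma ins_bound: "v < n \<Longrightarrow> a \<le> n \<Longrightarrow> ins a v < Suc n" by (auto simp: ins_def)
lemma a_less_ins: "a < ins a v \<longleftrightarrow> a \<le> v" by (auto simp: ins_def)
lemma ins_less_a: "ins a v < a \<longleftrightarrow> v < a" by (auto simp: ins_def)

lemma del_bound: "k < N \<Longrightarrow> k \<noteq> j \<Longrightarrow> j < N \<Longrightarrow> del j k < N - 1"
  by (auto simp: del_def)
lemma del_inj: "k1 \<noteq> j \<Longrightarrow> k2 \<noteq> j \<Longrightarrow> del j k1 = del j k2 \<Longrightarrow> k1 = k2"
  by (auto simp: del_def split: if_splits)

lemma Xl_nth: "k < N \<Longrightarrow> Xl N j p a ! k = real (sig j p a k)"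
  by (simp add: Xl_def)

lemma sig_bij:
  assumes j: "j < N" and p: "p permutes {..<N - 1}" and a: "a < N"
  shows "bij_betw (sig j p a) {..<N} {..<N}"
proof -
  have into: "sig j p a ` {..<N} \<subseteq> {..<N}"
  proof
    fix y assume "y \<in> sig j p a ` {..<N}"
    then obtain k where k: "k < N" "y = sig j p a k" by auto
    show "y \<in> {..<N}"
    proof (cases "k = j")
      case True thus ?thesis using k a by (simp add: sig_def)
    next
      case False
      have "del j k < N - 1" using del_bound[OF k(1) False j] .
      hence "p (del j k) < N - 1" using permutes_in_image[OF p, of "del j k"] by simp
      hence "ins a (p (del j k)) < Suc (N - 1)" using a by (intro ins_bound) auto
      thus ?thesis using k False j by (simp add: sig_def)
    qed
  qed
  have inj: "inj_on (sig j p a) {..<N}"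
  proof (rule inj_onI)
    fix k1 k2 assume k: "k1 \<in> {..<N}" "k2 \<in> {..<N}" "sig j p a k1 = sig j p a k2"
    show "k1 = k2"
    proof (cases "k1 = j"; cases "k2 = j")
      assume "k1 \<noteq> j" "k2 \<noteq> j"
      hence "p (del j k1) = p (del j k2)" using k(3) by (simp add: sig_def ins_inj)
      hence "del j k1 = del j k2" using p by (simp add: permutes_inj[THEN injD])
      thus ?thesis using del_inj \<open>k1 \<noteq> j\<close> \<open>k2 \<noteq> j\<close> by blast
    qed (use k(3) ins_neq in \<open>auto simp: sig_def dest: sym\<close>)
  qed
  have "sig j p a ` {..<N} = {..<N}"
    using endo_inj_surj[OF _ into inj] by simp
  thus ?thesis using inj by (simp add: bij_betw_def)
qed

lemma Xl_inj:
  assumes j: "j < N"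
    and p: "p permutes {..<N - 1}" and p': "p' permutes {..<N - 1}"
    and a: "a < N" and a': "a' < N" and eq: "Xl N j p a = Xl N j p' a'"
  shows "p = p' \<and> a = a'"
proof -
  have s: "sig j p a k = sig j p' a' k" if "k < N" for k
    using arg_cong[OF eq, of "\<lambda>x. x ! k"] that by (simp add: Xl_nth)
  have aa: "a = a'" using s[OF j] by (simp add: sig_def)
  have "p m = p' m" for m
  proof (cases "m < N - 1")
    case True
    define k where "k = (if m < j then m else Suc m)"
    have k: "k < N" "k \<noteq> j" "del j k = m" using True j by (auto simp: k_def del_def)
    from s[OF k(1)] k aa show ?thesis by (simp add: sig_def ins_inj)
  next
    case False
    thus ?thesis using p p' by (simp add: permutes_not_in)
  qed
  thus ?thesis using aa by auto
qed

lemma sorted_perm_id: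
  assumes bij: "bij_betw s {..<N} {..<N}"
    and sp: "is_sorting_perm N (map (\<lambda>k. real (s k)) [0..<N]) t"
  shows "\<forall>k<N. s (t k) = k"
proof -
  have tb: "bij_betw t {..<N} {..<N}" using sp by (simp add: is_sorting_perm_def)
  define f where "f k = s (t k)" for k
  have fb: "bij_betw f {..<N} {..<N}" unfolding f_def[abs_def]
    using bij_betw_trans[OF tb bij] by (simp add: comp_def)
  have mono: "f k \<le> f (Suc k)" if "Suc k < N" for k
  proof -
    have "t k < N" "t (Suc k) < N" using tb that by (auto simp: bij_betw_def)
    moreover have "map (\<lambda>k. real (s k)) [0..<N] ! t k \<le> map (\<lambda>k. real (s k)) [0..<N] ! t (Suc k)"
      using sp that by (simp add: is_sorting_perm_def)
    ultimately show ?thesis by (simp add: f_def)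
  qed
  have smono: "f k < f (Suc k)" if "Suc k < N" for k
  proof -
    have "f k \<noteq> f (Suc k)"
    proof
      assume "f k = f (Suc k)"
      moreover have "inj_on f {..<N}" using fb by (simp add: bij_betw_def)
      ultimately have "k = Suc k" using that by (auto dest: inj_onD)
      thus False by simp
    qed
    thus ?thesis using mono[OF that] by simp
  qed
  have lo: "k \<le> f k" if "k < N" for k
    using that
  proof (induction k)
    case 0 thus ?case by simp
  next
    case (Suc k) thus ?case using smono[of k] by simp
  qed
  have hi: "f (N - 1 - i) \<le> N - 1 - i" if "i < N" for i
    using that
  proof (induction i)
    case 0
    have "f (N - 1) < N" using fb 0 by (auto simp: bij_betw_def)
    thus ?case by simp
  next
    case (Suc i)
    have "f (N - 1 - Suc i) < f (Suc (N - 1 - Suc i))" using Suc.prems by (intro smono) auto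
    moreover have "Suc (N - 1 - Suc i) = N - 1 - i" using Suc.prems by simp
    ultimately show ?case using Suc by simp
  qed
  show ?thesis
  proof (intro allI impI)
    fix k assume k: "k < N"
    have "f (N - 1 - (N - 1 - k)) \<le> N - 1 - (N - 1 - k)" using hi[of "N - 1 - k"] k by simp
    hence "f k \<le> k" using k by simp
    thus "s (t k) = k" using lo[OF k] by (simp add: f_def)
  qed
qed

lemma sorting_disjoint:
  assumes s1: "bij_betw s1 {..<N} {..<N}" and s2: "bij_betw s2 {..<N} {..<N}"
    and j: "j < N" and ne: "s1 j \<noteq> s2 j"
    and t1: "is_sorting_perm N (map (\<lambda>k. real (s1 k)) [0..<N]) t"
    and t2: "is_sorting_perm N (map (\<lambda>k. real (s2 k)) [0..<N]) t"
  shows False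
proof -
  have tb: "bij_betw t {..<N} {..<N}" using t1 by (simp add: is_sorting_perm_def)
  obtain k where k: "k < N" "t k = j" using tb j by (metis bij_betw_iff_bijections lessThan_iff)
  have "s1 (t k) = k" "s2 (t k) = k" using sorted_perm_id[OF s1 t1] sorted_perm_id[OF s2 t2] k by auto
  thus False using ne k by simp
qed


definition wt :: "nat \<Rightarrow> nat \<Rightarrow> real" where "wt a c = 1 / \<bar>real a - real c\<bar>"

lemma Dif_cases:
  assumes j: "j < N" and p: "p permutes {..<N - 1}"
    and D: "Dif N (Xl N j p a) (Xl N j p c) (z, i, i')"
  shows "(j = i \<or> j = i') \<and> i \<noteq> i' \<and>
    ((a \<le> p (del j (if j = i then i' else i))) \<noteq> (c \<le> p (del j (if j = i then i' else i))))"
proof -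
  have ii: "i < N" "i' < N" using D by (auto simp: Dif_def cmp_bit_def)
  have neq: "i \<noteq> i'" using D by (auto simp: Dif_def cmp_bit_def)
  have D': "(real (sig j p a i) < real (sig j p a i')) \<noteq> (real (sig j p c i) < real (sig j p c i'))"
    using D ii by (simp add: Dif_def cmp_bit_def Xl_nth)
  hence D'': "(sig j p a i < sig j p a i') \<noteq> (sig j p c i < sig j p c i')" by simp
  show ?thesis
  proof (cases "j = i")
    case True
    thus ?thesis using D'' neq by (simp add: sig_def a_less_ins)
  next
    case False
    show ?thesis
    proof (cases "j = i'")
      case True
      thus ?thesis using D'' neq False by (auto simp: sig_def ins_less_a)
    next
      case False2: False
      thus ?thesis using D'' False by (simp add: sig_def ins_less)
    qed
  qed
qed

lemma term_bound:
  assumes j: "j < N" and p: "p permutes {..<N - 1}" and r: "\<And>x. r x \<ge> 0"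
    and jj: "j = i \<or> j = i'"
  shows "wt a c * (if Dif N (Xl N j p a) (Xl N j p c) (z, i, i') then r (Xl N j p a) * r (Xl N j p c) else 0)
    \<le> (if (a \<le> p (del j (if j = i then i' else i))) \<noteq> (c \<le> p (del j (if j = i then i' else i)))
        then r (Xl N j p a) * r (Xl N j p c) / \<bar>real a - real c\<bar> else 0)"
proof (cases "Dif N (Xl N j p a) (Xl N j p c) (z, i, i')")
  case True
  thus ?thesis using Dif_cases[OF j p True] by (simp add: wt_def)
next
  case False
  thus ?thesis using r by (auto intro!: divide_nonneg_nonneg mult_nonneg_nonneg)
qed

lemma inner_bound:
  assumes j: "j < N" and p: "p permutes {..<N - 1}" and r: "\<And>x. r x \<ge> 0"
  shows "(\<Sum>a<N. \<Sum>c<N. wt a c * (if Dif N (Xl N j p a) (Xl N j p c) (z, i, i') then r (Xl N j p a) * r (Xl N j p c) else 0))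
    \<le> (if j = i \<or> j = i' then pi * (\<Sum>a<N. (r (Xl N j p a))^2) else 0)"
proof (cases "j = i \<or> j = i'")
  case True
  define v where "v = p (del j (if j = i then i' else i))"
  have "(\<Sum>a<N. \<Sum>c<N. wt a c * (if Dif N (Xl N j p a) (Xl N j p c) (z, i, i') then r (Xl N j p a) * r (Xl N j p c) else 0))
     \<le> (\<Sum>a<N. \<Sum>c<N. if (a \<le> v) \<noteq> (c \<le> v) then r (Xl N j p a) * r (Xl N j p c) / \<bar>real a - real c\<bar> else 0)"
    unfolding v_def by (intro sum_mono term_bound[OF j p r True])
  also have "\<dots> \<le> pi * (\<Sum>a<N. (r (Xl N j p a))^2)"
    by (rule hilbert_form)
  finally show ?thesis using True by simp
next
  case False
  have "Dif N (Xl N j p a) (Xl N j p c) (z, i, i') = False" for a c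
    using Dif_cases[OF j p] False by blast
  thus ?thesis using False by simp
qed

definition Pset :: "nat \<Rightarrow> real list set" where
  "Pset N = (\<lambda>s. map (\<lambda>k. real (s k)) [0..<N]) ` {s. s permutes {..<N}}"

lemma Pset_finite: "finite (Pset N)"
  unfolding Pset_def by (intro finite_imageI finite_permutations) simp

lemma Pset_card: "card (Pset N) \<le> fact N"
proof -
  have "card (Pset N) \<le> card {s. s permutes {..<N}}" unfolding Pset_def
    by (intro card_image_le finite_permutations) simp
  also have "\<dots> = fact N" by (rule card_permutations) auto
  finally show ?thesis .
qed

lemma bij_in_Pset:
  assumes "bij_betw s {..<N} {..<N}"
  shows "map (\<lambda>k. real (s k)) [0..<N] \<in> Pset N"
proof -
  define s' where "s' k = (if k < N then s k else k)" for k
  have "bij_betw s' {..<N} {..<N}" using assms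
    by (rule bij_betw_cong[THEN iffD1, rotated]) (simp add: s'_def)
  hence "s' permutes {..<N}" by (rule bij_imp_permutes) (simp add: s'_def)
  moreover have "map (\<lambda>k. real (s k)) [0..<N] = map (\<lambda>k. real (s' k)) [0..<N]"
    by (simp add: s'_def)
  ultimately show ?thesis unfolding Pset_def by blast
qed

lemma Xl_in_Pset: "j < N \<Longrightarrow> p permutes {..<N - 1} \<Longrightarrow> a < N \<Longrightarrow> Xl N j p a \<in> Pset N"
  unfolding Xl_def by (rule bij_in_Pset) (rule sig_bij)

lemma sum_Xl_le:
  assumes j: "j < N" and g: "\<And>x. g x \<ge> (0::real)"
  shows "(\<Sum>p\<in>{p. p permutes {..<N - 1}}. \<Sum>a<N. g (Xl N j p a)) \<le> (\<Sum>x\<in>Pset N. g x)"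
proof -
  define S where "S = {p. p permutes {..<N - 1}} \<times> {..<N}"
  have inj: "inj_on (\<lambda>(p, a). Xl N j p a) S"
  proof (rule inj_onI)
    fix u w assume u: "u \<in> S" and w: "w \<in> S" and e: "(\<lambda>(p, a). Xl N j p a) u = (\<lambda>(p, a). Xl N j p a) w"
    obtain p a where pa: "u = (p, a)" by (cases u)
    obtain p' a' where pa': "w = (p', a')" by (cases w)
    have "p = p' \<and> a = a'"
      by (rule Xl_inj[OF j]) (use u w e pa pa' in \<open>auto simp: S_def\<close>)
    thus "u = w" using pa pa' by simp
  qed
  have "(\<Sum>p\<in>{p. p permutes {..<N - 1}}. \<Sum>a<N. g (Xl N j p a)) = (\<Sum>(p, a)\<in>S. g (Xl N j p a))"
    unfolding S_def by (rule sum.cartesian_product)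
  also have "\<dots> = (\<Sum>x\<in>(\<lambda>(p, a). Xl N j p a) ` S. g x)"
    using sum.reindex[OF inj, of g] by (simp add: case_prod_beta comp_def)
  also have "\<dots> \<le> (\<Sum>x\<in>Pset N. g x)"
    by (intro sum_mono2 Pset_finite) (auto simp: S_def intro: Xl_in_Pset[OF j] g)
  finally show ?thesis .
qed

lemma sum_delta_nat: "(\<Sum>j<(N::nat). if j = i then K else (0::real)) = (if i < N then K else 0)"
  by (induction N) auto

lemma count_two:
  assumes "K \<ge> (0::real)"
  shows "(\<Sum>j<(N::nat). if j = i \<or> j = i' then K else 0) \<le> 2 * K"
proof -
  have "(\<Sum>j<N. if j = i \<or> j = i' then K else 0) \<le> (\<Sum>j<N. (if j = i then K else 0) + (if j = i' then K else 0))"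
    using assms by (intro sum_mono) auto
  also have "\<dots> = (if i < N then K else 0) + (if i' < N then K else 0)"
    by (simp only: sum.distrib sum_delta_nat)
  also have "\<dots> \<le> 2 * K" using assms by auto
  finally show ?thesis .
qed

lemma comb_b:
  assumes r: "\<And>x. r x \<ge> 0"
  shows "(\<Sum>j<N. \<Sum>p\<in>{p. p permutes {..<N - 1}}. \<Sum>a<N. \<Sum>c<N.
      wt a c * (if Dif N (Xl N j p a) (Xl N j p c) (z, i, i') then r (Xl N j p a) * r (Xl N j p c) else 0))
    \<le> 2 * pi * (\<Sum>x\<in>Pset N. (r x)^2)"
proof -
  have K: "(\<Sum>x\<in>Pset N. (r x)^2) \<ge> 0" by (intro sum_nonneg) simp
  have "(\<Sum>j<N. \<Sum>p\<in>{p. p permutes {..<N - 1}}. \<Sum>a<N. \<Sum>c<N.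
      wt a c * (if Dif N (Xl N j p a) (Xl N j p c) (z, i, i') then r (Xl N j p a) * r (Xl N j p c) else 0))
    \<le> (\<Sum>j<N. if j = i \<or> j = i' then pi * (\<Sum>x\<in>Pset N. (r x)^2) else 0)"
  proof (rule sum_mono)
    fix j assume j: "j \<in> {..<N}"
    hence j': "j < N" by simp
    have "(\<Sum>p\<in>{p. p permutes {..<N - 1}}. \<Sum>a<N. \<Sum>c<N.
      wt a c * (if Dif N (Xl N j p a) (Xl N j p c) (z, i, i') then r (Xl N j p a) * r (Xl N j p c) else 0))
      \<le> (\<Sum>p\<in>{p. p permutes {..<N - 1}}. if j = i \<or> j = i' then pi * (\<Sum>a<N. (r (Xl N j p a))^2) else 0)"
      by (intro sum_mono inner_bound[OF j' _ r]) simp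
    also have "\<dots> \<le> (if j = i \<or> j = i' then pi * (\<Sum>x\<in>Pset N. (r x)^2) else 0)"
    proof (cases "j = i \<or> j = i'")
      case True
      have "(\<Sum>p\<in>{p. p permutes {..<N - 1}}. pi * (\<Sum>a<N. (r (Xl N j p a))^2))
          = pi * (\<Sum>p\<in>{p. p permutes {..<N - 1}}. \<Sum>a<N. (r (Xl N j p a))^2)"
        by (simp add: sum_distrib_left)
      also have "\<dots> \<le> pi * (\<Sum>x\<in>Pset N. (r x)^2)"
        by (intro mult_left_mono sum_Xl_le[OF j']) auto
      finally show ?thesis using True by simp
    qed simp
    finally show "(\<Sum>p\<in>{p. p permutes {..<N - 1}}. \<Sum>a<N. \<Sum>c<N.
      wt a c * (if Dif N (Xl N j p a) (Xl N j p c) (z, i, i') then r (Xl N j p a) * r (Xl N j p c) else 0))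
      \<le> (if j = i \<or> j = i' then pi * (\<Sum>x\<in>Pset N. (r x)^2) else 0)" .
  qed
  also have "\<dots> \<le> 2 * (pi * (\<Sum>x\<in>Pset N. (r x)^2))"
    by (rule count_two) (use K in simp)
  finally show ?thesis by simp
qed


lemma infsum_sum_fin:
  fixes f :: "'i \<Rightarrow> 'a \<Rightarrow> real"
  assumes "finite I" "\<And>i. i \<in> I \<Longrightarrow> f i summable_on A"
  shows "(\<lambda>b. \<Sum>i\<in>I. f i b) summable_on A \<and> infsum (\<lambda>b. \<Sum>i\<in>I. f i b) A = (\<Sum>i\<in>I. infsum (f i) A)"
  using assms
proof (induction I rule: finite_induct)
  case empty thus ?case by simp
next
  case (insert i I)
  have s1: "f i summable_on A" using insert by simp
  have ih: "(\<lambda>b. \<Sum>i\<in>I. f i b) summable_on A \<and> infsum (\<lambda>b. \<Sum>i\<in>I. f i b) A = (\<Sum>i\<in>I. infsum (f i) A)"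
    using insert by simp
  have "(\<lambda>b. f i b + (\<Sum>i\<in>I. f i b)) summable_on A" using summable_on_add[OF s1] ih by blast
  moreover have "infsum (\<lambda>b. f i b + (\<Sum>i\<in>I. f i b)) A = infsum (f i) A + infsum (\<lambda>b. \<Sum>i\<in>I. f i b) A"
    using infsum_add[OF s1] ih by blast
  ultimately show ?case using insert ih by simp
qed

lemma harm_double: "(\<Sum>a<N. \<Sum>c<N. wt a c) = 2 * (real N * harm N - real N)"
proof (induction N)
  case 0 thus ?case by simp
next
  case (Suc N)
  have row: "(\<Sum>c<N. wt N c) = harm N"
  proof -
    have "(\<Sum>c<N. wt N c) = (\<Sum>c<N. 1 / real (N - c))"
      by (intro sum.cong) (auto simp: wt_def of_nat_diff)
    also have "\<dots> = (\<Sum>k\<in>{1..N}. 1 / real k)"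
      by (rule sum.reindex_bij_witness[of _ "\<lambda>k. N - k" "\<lambda>c. N - c"]) auto
    also have "\<dots> = harm N" by (simp add: harm_def inverse_eq_divide)
    finally show ?thesis .
  qed
  have col: "(\<Sum>a<N. wt a N) = harm N"
    using row by (simp add: wt_def abs_minus_commute)
  have "(\<Sum>a<Suc N. \<Sum>c<Suc N. wt a c) = (\<Sum>a<N. \<Sum>c<N. wt a c) + (\<Sum>a<N. wt a N) + (\<Sum>c<N. wt N c) + wt N N"
    by (simp add: sum.distrib)
  also have "\<dots> = 2 * (real N * harm N - real N) + 2 * harm N" using Suc row col by (simp add: wt_def)
  also have "\<dots> = 2 * (real (Suc N) * harm (Suc N) - real (Suc N))"
    by (simp add: harm_Suc field_simps)
  finally show ?case .
qed

lemma infsum_sum_fin':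
  fixes f :: "'i \<Rightarrow> 'a \<Rightarrow> real"
  assumes "finite I" "\<And>i. f i summable_on A"
  shows "(\<lambda>b. \<Sum>i\<in>I. f i b) summable_on A" "infsum (\<lambda>b. \<Sum>i\<in>I. f i b) A = (\<Sum>i\<in>I. infsum (f i) A)"
  using infsum_sum_fin[OF assms(1), of f A] assms(2) by auto

lemma infsum_sum4:
  fixes f :: "'i \<Rightarrow> 'j \<Rightarrow> 'k \<Rightarrow> 'l \<Rightarrow> 'a \<Rightarrow> real"
  assumes fin: "finite I1" "finite I2" "finite I3" "finite I4"
    and s: "\<And>i1 i2 i3 i4. f i1 i2 i3 i4 summable_on A"
  shows "infsum (\<lambda>b. \<Sum>i1\<in>I1. \<Sum>i2\<in>I2. \<Sum>i3\<in>I3. \<Sum>i4\<in>I4. f i1 i2 i3 i4 b) A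
       = (\<Sum>i1\<in>I1. \<Sum>i2\<in>I2. \<Sum>i3\<in>I3. \<Sum>i4\<in>I4. infsum (f i1 i2 i3 i4) A)"
proof -
  have s3: "(\<lambda>b. \<Sum>i4\<in>I4. f i1 i2 i3 i4 b) summable_on A" for i1 i2 i3
    by (rule infsum_sum_fin'(1)[OF fin(4) s])
  have s2: "(\<lambda>b. \<Sum>i3\<in>I3. \<Sum>i4\<in>I4. f i1 i2 i3 i4 b) summable_on A" for i1 i2
    by (rule infsum_sum_fin'(1)[OF fin(3) s3])
  have s1: "(\<lambda>b. \<Sum>i2\<in>I2. \<Sum>i3\<in>I3. \<Sum>i4\<in>I4. f i1 i2 i3 i4 b) summable_on A" for i1
    by (rule infsum_sum_fin'(1)[OF fin(2) s2])
  have "infsum (\<lambda>b. \<Sum>i1\<in>I1. \<Sum>i2\<in>I2. \<Sum>i3\<in>I3. \<Sum>i4\<in>I4. f i1 i2 i3 i4 b) A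
      = (\<Sum>i1\<in>I1. infsum (\<lambda>b. \<Sum>i2\<in>I2. \<Sum>i3\<in>I3. \<Sum>i4\<in>I4. f i1 i2 i3 i4 b) A)"
    by (rule infsum_sum_fin'(2)[OF fin(1) s1])
  also have "\<dots> = (\<Sum>i1\<in>I1. \<Sum>i2\<in>I2. infsum (\<lambda>b. \<Sum>i3\<in>I3. \<Sum>i4\<in>I4. f i1 i2 i3 i4 b) A)"
    by (intro sum.cong refl infsum_sum_fin'(2)[OF fin(2) s2])
  also have "\<dots> = (\<Sum>i1\<in>I1. \<Sum>i2\<in>I2. \<Sum>i3\<in>I3. infsum (\<lambda>b. \<Sum>i4\<in>I4. f i1 i2 i3 i4 b) A)"
    by (intro sum.cong refl infsum_sum_fin'(2)[OF fin(3) s3])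
  also have "\<dots> = (\<Sum>i1\<in>I1. \<Sum>i2\<in>I2. \<Sum>i3\<in>I3. \<Sum>i4\<in>I4. infsum (f i1 i2 i3 i4) A)"
    by (intro sum.cong refl infsum_sum_fin'(2)[OF fin(4) s])
  finally show ?thesis .
qed

definition Wf :: "(state \<Rightarrow> state) \<Rightarrow> nat \<Rightarrow> nat \<Rightarrow> real" where
  "Wf U N t = (\<Sum>j<N. \<Sum>p\<in>{p. p permutes {..<N - 1}}. \<Sum>a<N. \<Sum>c<N.
      wt a c * ip (final_state U N (Xl N j p a) t) (final_state U N (Xl N j p c) t))"

lemma perm_finite: "finite {p. p permutes {..<(n::nat)}}"
  by (rule finite_permutations) simp

lemma W0:
  assumes U: "is_unitary U"
  shows "Wf U N 0 = real N * fact (N - 1) * (2 * (real N * harm N - real N))"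
proof -
  have "ip (final_state U N x 0) (final_state U N y 0) = 1" for x y
    using fs_l2[OF U, of N x 0] by (simp add: final_state_def ip_self)
  hence "Wf U N 0 = (\<Sum>j<N. \<Sum>p\<in>{p. p permutes {..<N - 1}}. \<Sum>a<N. \<Sum>c<N. wt a c)"
    by (simp add: Wf_def)
  also have "\<dots> = real N * real (card {p. p permutes {..<N - 1}}) * (\<Sum>a<N. \<Sum>c<N. wt a c)"
    by simp
  also have "card {p. p permutes {..<N - 1}} = fact (N - 1)"
    by (rule card_permutations) auto
  finally show ?thesis by (simp add: harm_double)
qed

lemma wt_nonneg: "wt a c \<ge> 0" by (simp add: wt_def)

lemma Wstep:
  assumes U: "is_unitary U"
  shows "Wf U N t - Wf U N (Suc t) \<le> 4 * pi * fact N"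
proof -
  define ps where "ps x = final_state U N x t" for x
  have l: "ps x \<in> l2" "sqnorm (ps x) = 1" for x using fs_l2[OF U] by (auto simp: ps_def)
  define G where "G x y b = (if Dif N x y b then cmod (ps x b) * cmod (ps y b) else 0)" for x y b
  define Tm where "Tm j p a c b = wt a c * G (Xl N j p a) (Xl N j p c) b" for j p a c b
  have Gs: "G x y summable_on UNIV" for x y unfolding G_def[abs_def] by (rule prod_summable_if[OF l(1) l(1)])
  have Ts: "Tm j p a c summable_on UNIV" for j p a c unfolding Tm_def[abs_def] by (intro summable_on_cmult_right Gs)
  have nxt: "ip (final_state U N x (Suc t)) (final_state U N y (Suc t)) = ip (cmp_op N x (ps x)) (cmp_op N y (ps y))" for x y
    by (simp add: fs_Suc ps_def unitary_ip[OF U] cmp_op_l2 l(1)[unfolded ps_def])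
  have td: "wt a c * ip (ps x) (ps y) - wt a c * ip (final_state U N x (Suc t)) (final_state U N y (Suc t))
      \<le> 2 * infsum (\<lambda>b. wt a c * G x y b) UNIV" for a c x y
  proof -
    have "wt a c * ip (ps x) (ps y) - wt a c * ip (final_state U N x (Suc t)) (final_state U N y (Suc t))
        = wt a c * (ip (ps x) (ps y) - ip (cmp_op N x (ps x)) (cmp_op N y (ps y)))"
      by (simp add: nxt algebra_simps)
    also have "\<dots> \<le> wt a c * (2 * infsum (G x y) UNIV)"
      unfolding G_def[abs_def] by (intro mult_left_mono oracle_diff l wt_nonneg)
    also have "\<dots> = 2 * infsum (\<lambda>b. wt a c * G x y b) UNIV"
      by (simp add: infsum_cmult_right')
    finally show ?thesis .
  qed
  have "Wf U N t - Wf U N (Suc t) = (\<Sum>j<N. \<Sum>p\<in>{p. p permutes {..<N - 1}}. \<Sum>a<N. \<Sum>c<N.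
      wt a c * ip (ps (Xl N j p a)) (ps (Xl N j p c)) - wt a c * ip (final_state U N (Xl N j p a) (Suc t)) (final_state U N (Xl N j p c) (Suc t)))"
    by (simp add: Wf_def ps_def sum_subtractf)
  also have "\<dots> \<le> (\<Sum>j<N. \<Sum>p\<in>{p. p permutes {..<N - 1}}. \<Sum>a<N. \<Sum>c<N. 2 * infsum (Tm j p a c) UNIV)"
    unfolding Tm_def by (intro sum_mono td)
  also have "\<dots> = 2 * (\<Sum>j<N. \<Sum>p\<in>{p. p permutes {..<N - 1}}. \<Sum>a<N. \<Sum>c<N. infsum (Tm j p a c) UNIV)"
    by (simp add: sum_distrib_left)
  also have "(\<Sum>j<N. \<Sum>p\<in>{p. p permutes {..<N - 1}}. \<Sum>a<N. \<Sum>c<N. infsum (Tm j p a c) UNIV)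
      = infsum (\<lambda>b. \<Sum>j<N. \<Sum>p\<in>{p. p permutes {..<N - 1}}. \<Sum>a<N. \<Sum>c<N. Tm j p a c b) UNIV"
    by (rule infsum_sum4[symmetric]) (auto intro: Ts perm_finite)
  also have "\<dots> \<le> infsum (\<lambda>b. 2 * pi * (\<Sum>x\<in>Pset N. (cmod (ps x b))^2)) UNIV"
  proof (rule infsum_mono)
    show "(\<lambda>b. \<Sum>j<N. \<Sum>p\<in>{p. p permutes {..<N - 1}}. \<Sum>a<N. \<Sum>c<N. Tm j p a c b) summable_on UNIV"
      by (intro infsum_sum_fin'(1) finite_lessThan perm_finite Ts)
    show "(\<lambda>b. 2 * pi * (\<Sum>x\<in>Pset N. (cmod (ps x b))^2)) summable_on UNIV"
      by (intro summable_on_cmult_right infsum_sum_fin'(1) Pset_finite l2_sq_summable l(1))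
    fix b :: basis
    obtain z i i' where b: "b = (z, i, i')" by (cases b)
    show "(\<Sum>j<N. \<Sum>p\<in>{p. p permutes {..<N - 1}}. \<Sum>a<N. \<Sum>c<N. Tm j p a c b)
        \<le> 2 * pi * (\<Sum>x\<in>Pset N. (cmod (ps x b))^2)"
      unfolding Tm_def G_def b by (rule comb_b) simp
  qed
  also have "\<dots> = 2 * pi * (\<Sum>x\<in>Pset N. infsum (\<lambda>b. (cmod (ps x b))^2) UNIV)"
    by (simp add: infsum_cmult_right' infsum_sum_fin'(2)[OF Pset_finite l2_sq_summable[OF l(1)]])
  also have "\<dots> = 2 * pi * real (card (Pset N))"
    using l(2) by (simp add: sqnorm_def)
  finally have "Wf U N t - Wf U N (Suc t) \<le> 4 * pi * real (card (Pset N))" by simp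
  also have "\<dots> \<le> 4 * pi * fact N"
  proof -
    have "real (card (Pset N)) \<le> fact N" using Pset_card[of N] by (metis of_nat_fact of_nat_le_iff)
    thus ?thesis by (intro mult_left_mono) auto
  qed
  finally show ?thesis .
qed


lemma W0':
  assumes U: "is_unitary U"
  shows "Wf U N 0 = (\<Sum>j<N. \<Sum>p\<in>{p. p permutes {..<N - 1}}. \<Sum>a<N. \<Sum>c<N. wt a c)"
proof -
  have "ip (final_state U N x 0) (final_state U N y 0) = 1" for x y
    using fs_l2[OF U, of N x 0] by (simp add: final_state_def ip_self)
  thus ?thesis by (simp add: Wf_def)
qed

lemma Wfinal:
  assumes U: "is_unitary U" and e: "0 \<le> eps" "eps < 1/2"
    and succ: "\<forall>x :: real list. length x = N \<longrightarrow> success_prob U out N x T \<ge> 1 - eps"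
  shows "Wf U N T \<le> 2 * sqrt (eps * (1 - eps)) * Wf U N 0"
proof -
  have tb: "wt a c * ip (final_state U N (Xl N j p a) T) (final_state U N (Xl N j p c) T)
      \<le> 2 * sqrt (eps * (1 - eps)) * wt a c"
    if j: "j < N" and p: "p permutes {..<N - 1}" and a: "a < N" and c: "c < N" for j p a c
  proof (cases "a = c")
    case True thus ?thesis by (simp add: wt_def)
  next
    case False
    define x y where "x = Xl N j p a" and "y = Xl N j p c"
    have lx: "length x = N" "length y = N" by (simp_all add: x_def y_def Xl_def)
    have disj: "{b. is_sorting_perm N x (out b)} \<inter> {b. is_sorting_perm N y (out b)} = {}"
    proof (rule ccontr)
      assume "\<not> ?thesis"
      then obtain b where b: "is_sorting_perm N x (out b)" "is_sorting_perm N y (out b)" by blast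
      show False
        by (rule sorting_disjoint[OF sig_bij[OF j p a] sig_bij[OF j p c] j])
           (use False b in \<open>auto simp: sig_def x_def y_def Xl_def\<close>)
    qed
    have "ip (final_state U N x T) (final_state U N y T) \<le> 2 * sqrt (eps * (1 - eps))"
      by (rule pair_bound[OF conjunct1[OF fs_l2[OF U]] conjunct1[OF fs_l2[OF U]]
            conjunct2[OF fs_l2[OF U]] conjunct2[OF fs_l2[OF U]] disj _ _ e])
         (use succ lx in \<open>auto simp: success_prob_def\<close>)
    thus ?thesis unfolding x_def y_def using wt_nonneg[of a c]
      by (simp add: mult_left_mono mult.commute)
  qed
  have "Wf U N T \<le> (\<Sum>j<N. \<Sum>p\<in>{p. p permutes {..<N - 1}}. \<Sum>a<N. \<Sum>c<N. 2 * sqrt (eps * (1 - eps)) * wt a c)"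
    unfolding Wf_def by (intro sum_mono tb) auto
  also have "\<dots> = 2 * sqrt (eps * (1 - eps)) * Wf U N 0"
    by (simp add: W0'[OF U] sum_distrib_left mult.left_commute)
  finally show ?thesis .
qed

lemma Wdecay:
  assumes U: "is_unitary U"
  shows "Wf U N 0 - Wf U N t \<le> real t * (4 * pi * fact N)"
proof (induction t)
  case 0 thus ?case by simp
next
  case (Suc t)
  thus ?case using Wstep[OF U, of N t] by (simp add: algebra_simps)
qed

theorem theorem2:
  fixes N T :: nat and eps :: real
    and U :: "state \<Rightarrow> state" and out :: "basis \<Rightarrow> nat \<Rightarrow> nat"
  assumes "N \<ge> 1" and "0 \<le> eps" and "eps < 1/2"
    and "is_unitary U"
    and "\<forall>x :: real list. length x = N \<longrightarrow> success_prob U out N x T \<ge> 1 - eps"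
  shows "real T \<ge> (1 - 2 * sqrt (eps * (1 - eps))) * (real N / (2 * pi)) * (harm N - 1)
         \<and> (eps = 0 \<longrightarrow> real T > (real N / (2 * pi)) * (ln (real N) - 1))"
proof -
  define S where "S = 2 * sqrt (eps * (1 - eps))"
  have fN: "(fact N :: real) = real N * fact (N - 1)"
    using assms(1) by (metis fact_reduce of_nat_fact not_one_le_zero le_zero_eq neq0_conv of_nat_mult)
  have fpos: "(fact N :: real) > 0" by simp
  have W0v: "Wf U N 0 = fact N * (2 * real N * (harm N - 1))"
    using W0[OF assms(4), of N] fN by (simp add: algebra_simps)
  have "(1 - S) * Wf U N 0 \<le> Wf U N 0 - Wf U N T"
    using Wfinal[OF assms(4,2,3,5)] by (simp add: S_def algebra_simps)
  also have "\<dots> \<le> real T * (4 * pi * fact N)" by (rule Wdecay[OF assms(4)])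
  finally have "fact N * ((1 - S) * (2 * real N * (harm N - 1))) \<le> fact N * (real T * (4 * pi))"
    unfolding W0v by (simp add: algebra_simps)
  hence k: "(1 - S) * (2 * real N * (harm N - 1)) \<le> real T * (4 * pi)"
    using fpos by (simp only: mult_le_cancel_left_pos)
  have main: "real T \<ge> (1 - S) * (real N / (2 * pi)) * (harm N - 1)"
  proof -
    have "(1 - S) * (real N / (2 * pi)) * (harm N - 1) = (1 - S) * (2 * real N * (harm N - 1)) / (4 * pi)"
      by (simp add: field_simps)
    also have "\<dots> \<le> real T" using k by (simp add: field_simps)
    finally show ?thesis .
  qed
  moreover have "eps = 0 \<longrightarrow> real T > (real N / (2 * pi)) * (ln (real N) - 1)"
  proof
    assume e0: "eps = 0"
    have "ln (real N) < ln (real N + 1)" using assms(1) by simp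
    also have "\<dots> \<le> harm N" by (rule ln_le_harm)
    finally have "ln (real N) - 1 < harm N - 1" by simp
    moreover have "real N / (2 * pi) > 0" using assms(1) by simp
    ultimately have "(real N / (2 * pi)) * (ln (real N) - 1) < (real N / (2 * pi)) * (harm N - 1)"
      by (simp only: mult_strict_left_mono)
    also have "\<dots> \<le> real T" using main e0 by (simp add: S_def)
    finally show "real T > (real N / (2 * pi)) * (ln (real N) - 1)" .
  qed
  ultimately show ?thesis by (simp add: S_def)
qed


end
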